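(* Let $n\ge2$, $1\le r\le n-1$ and $\alpha,\beta\in\mathbb{Z}_2^n$. Then $\mathrm{adp}^{\mathrm{XR}}_r(\alpha,\beta\to0)=\mathrm{adp}^{\oplus}(\alpha,\beta\to0)$.
   Context: For $x\in\mathbb{Z}_2^n$, $x=(x_0,\dots,x_{n-1})$ is identified with the integer $\sum_i x_i2^{n-1-i}$; $+$ is addition modulo $2^n$, $\oplus$ is bitwise XOR, $x\lll r=(x_r,\dots,x_{n-1},x_0,\dots,x_{r-1})$. For $f:(\mathbb{Z}_2^n)^2\to\mathbb{Z}_2^n$, $\mathrm{adp}^f(\alpha,\beta\to\gamma)=4^{-n}\#\{(x,y): f(x+\alpha,y+\beta)=f(x,y)+\gamma\}$. $\mathrm{adp}^{\oplus}$ is this for $f(x,y)=x\oplus y$, and $\mathrm{adp}^{\mathrm{XR}}_r$ for $f(x,y)=(x\oplus y)\lll r$. *)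

theory Defs
  imports Main "HOL.Real"
begin

text \<open>Elements of Z_2^n are identified with integers in {0..<2^n}
  (x = (x_0,...,x_{n-1}) corresponds to sum x_i 2^(n-1-i)).\<close>

definition words :: "nat \<Rightarrow> nat set" where
  "words n = {0..<2^n}"

definition addm :: "nat \<Rightarrow> nat \<Rightarrow> nat \<Rightarrow> nat" where
  "addm n x y = (x + y) mod 2^n"

text \<open>Cyclic left rotation by r of an n-bit word:
  (x_0,...,x_{n-1}) to (x_r,...,x_{n-1},x_0,...,x_{r-1}).\<close>
definition rotl :: "nat \<Rightarrow> nat \<Rightarrow> nat \<Rightarrow> nat" where
  "rotl n r x = (x * 2^r) mod 2^n + x div 2^(n - r)"

definition adp :: "nat \<Rightarrow> (nat \<Rightarrow> nat \<Rightarrow> nat) \<Rightarrow> nat \<Rightarrow> nat \<Rightarrow> nat \<Rightarrow> real" where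
  "adp n f a b g = real (card {(x, y). x \<in> words n \<and> y \<in> words n \<and>
       f (addm n x a) (addm n y b) = addm n (f x y) g}) / 4 ^ n"

definition adp_xor :: "nat \<Rightarrow> nat \<Rightarrow> nat \<Rightarrow> nat \<Rightarrow> real" where
  "adp_xor n a b g = adp n (\<lambda>x y. xor x y) a b g"

definition adp_XR :: "nat \<Rightarrow> nat \<Rightarrow> nat \<Rightarrow> nat \<Rightarrow> nat \<Rightarrow> real" where
  "adp_XR n r a b g = adp n (\<lambda>x y. rotl n r (xor x y)) a b g"

end

theory Submission
  imports Defs
begin

lemma xor_words:
  fixes x y :: nat
  assumes "x < 2^n" "y < 2^n"
  shows "xor x y < 2^n"
proof -
  have "take_bit n (xor x y) = xor (take_bit n x) (take_bit n y)" by (rule take_bit_xor)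
  also have "\<dots> = xor x y" using assms by (simp add: take_bit_nat_eq_self)
  finally have "take_bit n (xor x y) = xor x y" .
  moreover have "take_bit n (xor x y) < 2^n" by (rule take_bit_nat_less_exp)
  ultimately show ?thesis by simp
qed

lemma rotl_eq:
  fixes z :: nat
  assumes "z < 2^n" "r \<le> n"
  shows "rotl n r z = (z mod 2^(n-r)) * 2^r + z div 2^(n-r)"
proof -
  define d :: nat where "d = 2^(n-r)"
  have n: "(2::nat)^n = d * 2^r" using assms(2) by (simp add: d_def flip: power_add)
  have "(z div d) * 2^n + (z mod d) * 2^r = ((z div d) * d + z mod d) * 2^r"
    by (simp only: n distrib_right mult.assoc)
  also have "\<dots> = z * 2^r" by simp
  finally have e: "z * 2^r = (z div d) * 2^n + (z mod d) * 2^r" by simp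
  have "(z mod d) * 2^r < 2^n"
    using n by (simp add: d_def)
  then have "(z * 2^r) mod 2^n = (z mod d) * 2^r"
    by (simp only: e mod_mult_self3 mod_less)
  thus ?thesis by (simp add: rotl_def d_def)
qed

lemma rotl_inj:
  fixes z1 z2 :: nat
  assumes "z1 < 2^n" "z2 < 2^n" "r \<le> n" "rotl n r z1 = rotl n r z2"
  shows "z1 = z2"
proof -
  define d :: nat where "d = 2^(n-r)"
  have n: "(2::nat)^n = d * 2^r" using assms(3) by (simp add: d_def flip: power_add)
  have k: "rotl n r z mod 2^r = z div d \<and> rotl n r z div 2^r = z mod d" if "z < 2^n" for z
  proof -
    have lt: "z div d < 2^r" using that n
      by (simp add: d_def div_less_iff_less_mult mult.commute)
    show ?thesis using rotl_eq[OF that assms(3)] lt by (simp add: d_def)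
  qed
  have "z1 div d = z2 div d" "z1 mod d = z2 mod d" using k[OF assms(1)] k[OF assms(2)] assms(4) by metis+
  thus ?thesis by (metis div_mult_mod_eq)
qed

theorem proposition1:
  fixes n r \<alpha> \<beta> :: nat
  assumes "n \<ge> 2" and "1 \<le> r" and "r \<le> n - 1"
    and "\<alpha> \<in> words n" and "\<beta> \<in> words n"
  shows "adp_XR n r \<alpha> \<beta> 0 = adp_xor n \<alpha> \<beta> 0"
proof -
  have rn: "r \<le> n" using assms by simp
  have am: "addm n a b < 2^n" for a b :: nat by (simp add: addm_def)
  have rl: "rotl n r z < 2^n" if "z < 2^n" for z :: nat
  proof -
    have "(z mod 2^(n-r)) * 2^r + z div 2^(n-r) < 2^n"
    proof -
      have a: "z div 2^(n-r) < 2^r" using that rn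
        by (simp add: div_less_iff_less_mult flip: power_add)
      have b: "z mod 2^(n-r) + 1 \<le> 2^(n-r)" by (simp add: Suc_le_eq)
      have "(z mod 2^(n-r)) * 2^r + z div 2^(n-r) < (z mod 2^(n-r) + 1) * 2^r" using a by simp
      also have "\<dots> \<le> 2^(n-r) * 2^r" using b by (rule mult_right_mono) simp
      also have "\<dots> = 2^n" using rn by (simp flip: power_add)
      finally show ?thesis .
    qed
    thus ?thesis using rotl_eq[OF that rn] by simp
  qed
  have xw: "xor (addm n x \<alpha>) (addm n y \<beta>) < 2^n" for x y :: nat by (rule xor_words[OF am am])
  have P: "(x \<in> words n \<and> y \<in> words n \<and>
       rotl n r (xor (addm n x \<alpha>) (addm n y \<beta>)) = addm n (rotl n r (xor x y)) 0)
     = (x \<in> words n \<and> y \<in> words n \<and>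
       xor (addm n x \<alpha>) (addm n y \<beta>) = addm n (xor x y) 0)" for x y :: nat
  proof (cases "x \<in> words n \<and> y \<in> words n")
    case False thus ?thesis by blast
  next
    case True
    hence x: "x < 2^n" and y: "y < 2^n" by (auto simp: words_def)
    have xy: "xor x y < (2::nat)^n" by (rule xor_words[OF x y])
    have "(rotl n r (xor (addm n x \<alpha>) (addm n y \<beta>)) = addm n (rotl n r (xor x y)) 0)
       = (rotl n r (xor (addm n x \<alpha>) (addm n y \<beta>)) = rotl n r (xor x y))"
      using rl[OF xy] by (simp add: addm_def)
    also have "\<dots> = (xor (addm n x \<alpha>) (addm n y \<beta>) = xor x y)"
      using rotl_inj[OF xw[of x y] xy rn] by (intro iffI) simp_all
    also have "\<dots> = (xor (addm n x \<alpha>) (addm n y \<beta>) = addm n (xor x y) 0)"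
      using xy by (simp add: addm_def)
    finally show ?thesis using True by simp
  qed
  have S: "{(x, y). x \<in> words n \<and> y \<in> words n \<and>
       rotl n r (xor (addm n x \<alpha>) (addm n y \<beta>)) = addm n (rotl n r (xor x y)) 0}
     = {(x, y). x \<in> words n \<and> y \<in> words n \<and>
       xor (addm n x \<alpha>) (addm n y \<beta>) = addm n (xor x y) 0}"
    using P by blast
  show ?thesis unfolding adp_XR_def adp_xor_def adp_def using S by simp
qed

end
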